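(* Consider one group of $p'$ PEs holding locally sorted string arrays $S_0',\dots,S_{p'-1}'$ with concatenation $S'$, partitioned into $r$ buckets by string-based regular sampling with sampling factor $v>0$, where $\omega=|S'|/(p'(v+1))$ need not be an integer and samples are drawn with spacing $\lceil\omega\rceil$. If $k\ge1$ and $|S'|=\Omega(p'(v+1)k)$, then every bucket $B^j$ contains at most $\bigl(1+\frac{r}{v}\bigr)\bigl(1+\frac1k\bigr)\frac{|S'|}{r}$ strings.
   Context: String-based regular sampling with sampling factor $v$ (where $r$ divides $p'$): $p'(v+1)$ samples (possibly overlapping) are drawn from the sorted local arrays such that on each PE at most $\lceil\omega\rceil$ strings lie between two consecutive local samples, where $\omega=|S'|/(p'(v+1))$; PE $i$'s samples are $V_i$. The union $V$ of all samples is sorted and splitters $f_j=V[j|V|/r-1]$ for $0<j<r$ are chosen, $f_0=-\infty$, $f_r=\infty$. Buckets are $B^j=\bigcup_i\{s\in S_i':f_j<s\le f_{j+1}\}$, $j=0,\dots,r-1$.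
   Formalization: All strings of $S'$ are pairwise distinct, on each PE at most $\lceil\omega\rceil$ strings also lie before the first and after the last local sample, and $|S'|=\Omega(p'(v+1)k)$ means $|S'|$ is at least one fixed positive multiple of $p'(v+1)k$. The paper assumes this as well. *)

theory Defs
  imports Complex_Main "HOL-Library.List_Lexorder"
begin

text \<open>Strings are lists over a linearly ordered alphabet, compared
lexicographically (HOL-Library.List_Lexorder).  PE i (i < p) holds the locally
sorted array S i; the samples of PE i are given by the list P i of positions
into S i (nondecreasing; equal positions = overlapping samples).\<close>

text \<open>Sampling condition with spacing w: with virtual sentinels at position -1
and at position len, at most w strings lie strictly between two consecutive
(local) samples.\<close>
definition gaps_ok :: "nat \<Rightarrow> nat \<Rightarrow> nat list \<Rightarrow> bool" where
  "gaps_ok w len P \<longleftrightarrow> sorted P \<and> (\<forall>t\<in>set P. t < len) \<and>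
     (let e = (-1::int) # map int P @ [int len]
      in \<forall>t < length e - 1. e ! Suc t - e ! t - 1 \<le> int w)"

definition samples :: "nat \<Rightarrow> (nat \<Rightarrow> 'a::linorder list) \<Rightarrow> (nat \<Rightarrow> nat list) \<Rightarrow> 'a list" where
  "samples p S P = sort (concat (map (\<lambda>i. map (\<lambda>t. S i ! t) (P i)) [0..<p]))"

definition splitter :: "'a list \<Rightarrow> nat \<Rightarrow> nat \<Rightarrow> 'a" where
  "splitter V r j = V ! (j * length V div r - 1)"

text \<open>Membership in bucket j (0 \<le> j < r), with f_0 = -\<infinity> and f_r = \<infinity>.\<close>
definition in_bucket :: "'a::linorder list \<Rightarrow> nat \<Rightarrow> nat \<Rightarrow> 'a \<Rightarrow> bool" where
  "in_bucket V r j s \<longleftrightarrow>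
     (j = 0 \<or> splitter V r j < s) \<and> (Suc j = r \<or> s \<le> splitter V r (Suc j))"

definition bucket_size :: "nat \<Rightarrow> (nat \<Rightarrow> 'a::linorder list) \<Rightarrow> 'a list \<Rightarrow> nat \<Rightarrow> nat \<Rightarrow> nat" where
  "bucket_size p S V r j =
     card {(i, t). i < p \<and> t < length (S i) \<and> in_bucket V r j (S i ! t)}"

end

theory Submission
  imports Defs
begin

lemma ivt_step:
  fixes f :: "nat \<Rightarrow> int"
  shows "f 0 < a \<Longrightarrow> a \<le> f n \<Longrightarrow> \<exists>t<n. f t < a \<and> a \<le> f (Suc t)"
proof (induction n)
  case 0 then show ?case by simp
next
  case (Suc n)
  show ?case
  proof (cases "a \<le> f n")
    case True
    with Suc obtain t where "t < n" "f t < a" "a \<le> f (Suc t)" by blast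
    then show ?thesis by (intro exI[of _ t]) auto
  next
    case False
    then show ?thesis using Suc.prems by (intro exI[of _ n]) auto
  qed
qed

lemma gaps_cover:
  assumes g: "gaps_ok w len P" and a: "a + w < len"
  shows "\<exists>q\<in>set P. a \<le> q \<and> q \<le> a + w"
proof -
  define e where "e = (-1::int) # map int P @ [int len]"
  have le: "length e = length P + 2" by (simp add: e_def)
  have gap: "\<forall>t < length e - 1. e ! Suc t - e ! t - 1 \<le> int w"
    using g unfolding gaps_ok_def e_def Let_def by simp
  have e0: "e ! 0 < int a" by (simp add: e_def)
  have en: "int a \<le> e ! (length P + 1)" using a by (simp add: e_def nth_append)
  obtain t where t: "t < length P + 1" "e ! t < int a" "int a \<le> e ! Suc t"
    using ivt_step[of "\<lambda>i. e ! i", OF e0 en] by blast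
  have "e ! Suc t - e ! t - 1 \<le> int w" using gap t le by auto
  hence up: "e ! Suc t \<le> int a + int w" using t by linarith
  show ?thesis
  proof (cases "t = length P")
    case True
    then have "e ! Suc t = int len" by (simp add: e_def nth_append)
    then show ?thesis using up a by simp
  next
    case False
    then have tl: "t < length P" using t by simp
    then have "e ! Suc t = int (P ! t)" by (simp add: e_def nth_append)
    then show ?thesis using up t tl by (intro bexI[of _ "P ! t"]) auto
  qed
qed

lemma interval_count:
  assumes cov: "\<forall>a. a + w < len \<longrightarrow> (\<exists>q\<in>set P. a \<le> q \<and> q \<le> a + w)"
  shows "b \<le> len \<Longrightarrow> card {a..<b} \<le> (w+1) * card (set P \<inter> {a..<b}) + w"
proof (induction "b - a" arbitrary: a rule: less_induct)
  case less
  show ?case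
  proof (cases "b - a \<le> w")
    case True then show ?thesis by simp
  next
    case False
    then have "a + w < len" using less.prems by linarith
    then obtain q where q: "q \<in> set P" "a \<le> q" "q \<le> a + w" using cov by blast
    have qb: "q < b" using q False by linarith
    have IH: "card {Suc q..<b} \<le> (w+1) * card (set P \<inter> {Suc q..<b}) + w"
      using less.hyps[of "Suc q"] less.prems q qb by simp
    have sub: "insert q (set P \<inter> {Suc q..<b}) \<subseteq> set P \<inter> {a..<b}" using q qb by auto
    have "card (insert q (set P \<inter> {Suc q..<b})) = Suc (card (set P \<inter> {Suc q..<b}))"
      by simp
    moreover have "card (insert q (set P \<inter> {Suc q..<b})) \<le> card (set P \<inter> {a..<b})"
      by (rule card_mono[OF _ sub]) simp
    ultimately have c: "Suc (card (set P \<inter> {Suc q..<b})) \<le> card (set P \<inter> {a..<b})" by simp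
    have "(w+1) * Suc (card (set P \<inter> {Suc q..<b})) \<le> (w+1) * card (set P \<inter> {a..<b})"
      using c by (rule mult_le_mono2)
    moreover have "card {a..<b} = (Suc q - a) + card {Suc q..<b}" using q qb by simp
    moreover have "(w+1) * Suc (card (set P \<inter> {Suc q..<b})) = (w+1) + (w+1) * card (set P \<inter> {Suc q..<b})"
      by (rule mult_Suc_right)
    moreover have "Suc q - a \<le> w + 1" using q by linarith
    ultimately show ?thesis using IH by linarith
  qed
qed

lemma convex_count:
  assumes cov: "\<forall>a. a + w < len \<longrightarrow> (\<exists>q\<in>set P. a \<le> q \<and> q \<le> a + w)"
    and T: "T \<subseteq> {..<len}"
    and cv: "\<And>x y z. x \<in> T \<Longrightarrow> z \<in> T \<Longrightarrow> x \<le> y \<Longrightarrow> y \<le> z \<Longrightarrow> y \<in> T"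
  shows "card T \<le> (w+1) * card (set P \<inter> T) + w"
proof (cases "T = {}")
  case True then show ?thesis by simp
next
  case False
  have fin: "finite T" using T finite_subset by blast
  have eq: "T = {Min T..<Suc (Max T)}"
  proof
    show "T \<subseteq> {Min T..<Suc (Max T)}"
    proof
      fix x assume x: "x \<in> T"
      have "Min T \<le> x" using Min_le[OF fin x] .
      moreover have "x \<le> Max T" using Max_ge[OF fin x] .
      ultimately show "x \<in> {Min T..<Suc (Max T)}" by simp
    qed
    show "{Min T..<Suc (Max T)} \<subseteq> T"
    proof
      fix y assume "y \<in> {Min T..<Suc (Max T)}"
      then have "Min T \<le> y" "y \<le> Max T" by auto
      then show "y \<in> T" using cv[OF Min_in[OF fin False] Max_in[OF fin False]] by blast
    qed
  qed
  have "Suc (Max T) \<le> len" using T fin False by (metis Max_in lessThan_iff Suc_leI subsetD)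
  from interval_count[OF cov this, of "Min T"] show ?thesis using eq by simp
qed

lemma distinct_concat_S:
  "distinct (concat (map S [0..<p])) \<Longrightarrow>
   (\<forall>i<p. distinct (S i)) \<and> (\<forall>i i'. i < p \<and> i' < p \<and> i \<noteq> i' \<longrightarrow> set (S i) \<inter> set (S i') = {})"
proof (induction p)
  case 0 then show ?case by simp
next
  case (Suc p)
  have d: "distinct (concat (map S [0..<p]) @ S p)" using Suc.prems by simp
  then have IH: "(\<forall>i<p. distinct (S i)) \<and> (\<forall>i i'. i < p \<and> i' < p \<and> i \<noteq> i' \<longrightarrow> set (S i) \<inter> set (S i') = {})"
    using Suc.IH by simp
  have dp: "distinct (S p)" using d by simp
  have dd: "set (concat (map S [0..<p])) \<inter> set (S p) = {}" using d by simp
  have disj: "\<forall>i<p. set (S i) \<inter> set (S p) = {}"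
  proof (intro allI impI)
    fix i assume "i < p"
    then have "set (S i) \<subseteq> set (concat (map S [0..<p]))" by auto
    then show "set (S i) \<inter> set (S p) = {}" using dd by blast
  qed
  show ?case
  proof (intro conjI allI impI)
    fix i assume "i < Suc p" then show "distinct (S i)" using IH dp less_Suc_eq by auto
  next
    fix i i' assume "i < Suc p \<and> i' < Suc p \<and> i \<noteq> i'"
    then show "set (S i) \<inter> set (S i') = {}" using IH disj less_Suc_eq[of i p] less_Suc_eq[of i' p]
      by (metis inf_commute)
  qed
qed

lemma sum_list_upt_lessThan: "sum_list (map f [0..<p]) = sum f {..<p}"
  by (induction p) auto

lemma bucket_vals:
  assumes s: "sorted V" and lV: "length V = r * L" and j: "j < r"
  shows "card {s \<in> set V. in_bucket V r j s} \<le> L"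
proof -
  have r0: "0 < r" using j by simp
  have spl: "\<And>j'. splitter V r j' = V ! (j' * L - 1)"
    unfolding splitter_def lV using r0 by simp
  have "{s \<in> set V. in_bucket V r j s} \<subseteq> (\<lambda>i. V ! i) ` {j*L..<(Suc j)*L}"
  proof
    fix x assume x: "x \<in> {s \<in> set V. in_bucket V r j s}"
    then obtain i where i: "i < length V" "V ! i = x" by (auto simp: in_set_conv_nth)
    have b: "in_bucket V r j x" using x by simp
    have lo: "j * L \<le> i"
    proof (rule ccontr)
      assume "\<not> j * L \<le> i"
      then have "j \<noteq> 0" "i \<le> j*L - 1" by (metis mult_zero_left le0, simp)
      then have "V ! (j*L - 1) < x" using b spl unfolding in_bucket_def by auto
      moreover have "V ! i \<le> V ! (j*L - 1)"
      proof -
        have "j*L \<le> r*L" using j by simp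
        then have "j*L - 1 < length V" using lV \<open>\<not> j * L \<le> i\<close> by linarith
        then show ?thesis using sorted_nth_mono[OF s \<open>i \<le> j*L - 1\<close>] by blast
      qed
      ultimately show False using i by simp
    qed
    show "x \<in> (\<lambda>i. V ! i) ` {j*L..<(Suc j)*L}"
    proof (cases "i < Suc j * L")
      case True then show ?thesis using lo i by auto
    next
      case False
      then have sj: "Suc j \<noteq> r" using i lV by auto
      then have "x \<le> V ! (Suc j * L - 1)" using b spl unfolding in_bucket_def by auto
      moreover have "V ! (Suc j * L - 1) \<le> V ! i"
        using sorted_nth_mono[OF s _ i(1)] False by simp
      ultimately have "V ! (Suc j * L - 1) = x" using i by simp
      moreover have "L > 0" using False i lV by (metis less_le_trans mult_0_right not_gr0 not_less_zero)
      ultimately show ?thesis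
        by (intro image_eqI[of _ _ "Suc j * L - 1"]) auto
    qed
  qed
  then have "card {s \<in> set V. in_bucket V r j s} \<le> card ((\<lambda>i. V ! i) ` {j*L..<(Suc j)*L})"
    by (intro card_mono) auto
  also have "\<dots> \<le> card {j*L..<(Suc j)*L}" by (rule card_image_le) simp
  finally show ?thesis by simp
qed

lemma final_arith:
  fixes N m p v r k w L :: real
  assumes m: "m = p * (v + 1)" and rL: "r * L = m" and w: "w \<le> N / m + 1" and w0: "0 \<le> w"
    and r: "r > 0" and v: "v > 0" and p: "p > 0" and k: "k \<ge> 1" and N: "2 * m * k \<le> N"
  shows "(w + 1) * L + p * w \<le> (1 + r / v) * (1 + 1 / k) * N / r"
proof -
  have m0: "m > 0" using m p v by simp
  have N0: "N \<ge> 0" using N m0 k by (smt (verit) mult_pos_pos)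
  have L: "L = m / r" using rL r by (simp add: field_simps)
  have L0: "L \<ge> 0" using L m0 r by simp
  have a1: "(w + 1) * L \<le> (N / m + 2) * L" using w L0 by (intro mult_right_mono) auto
  have a2: "(N / m + 2) * L = N / r + 2 * m / r" unfolding L using m0 r by (simp add: field_simps)
  have a3: "p * w \<le> p * (N / m + 1)" using w p by (intro mult_left_mono) auto
  have a4: "p * (N / m + 1) = N / (v + 1) + p" using m m0 p v by (simp add: field_simps)
  have a5: "N / (v + 1) \<le> N / v" using N0 v by (intro divide_left_mono) auto
  have a6: "2 * m / r \<le> N / (r * k)"
  proof -
    have "2 * m / r = (2 * m * k) / (r * k)" using k r by simp
    also have "\<dots> \<le> N / (r * k)" using N r k by (intro divide_right_mono) auto
    finally show ?thesis .
  qed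
  have a7: "p \<le> N / (v * k)"
  proof -
    have vk: "0 \<le> v * k" using v k by simp
    have e2: "2 * ((v + 1) * k) = 2 * (v * k) + 2 * k" by (simp add: algebra_simps)
    have "v * k \<le> 2 * ((v + 1) * k)" using vk k e2 by linarith
    then have "p * (v * k) \<le> p * (2 * ((v + 1) * k))" using p by (intro mult_left_mono) auto
    also have "\<dots> = 2 * m * k" using m by (simp add: algebra_simps)
    finally have "p * (v * k) \<le> 2 * m * k" .
    then have "p * (v * k) \<le> N" using N by simp
    then show ?thesis using v k by (simp add: field_simps)
  qed
  have rhs: "(1 + r / v) * (1 + 1 / k) * N / r = N / r + N / v + N / (r * k) + N / (v * k)"
    using r v k by (simp add: field_simps)
  show ?thesis using a1 a2 a3 a4 a5 a6 a7 rhs by linarith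
qed

theorem theorem16:
  "\<exists>c::real > 0. \<forall>(p::nat) (r::nat) (v::nat) (k::real)
      (S :: nat \<Rightarrow> 'c::linorder list list) (P :: nat \<Rightarrow> nat list).
     (0 < p \<and> 0 < r \<and> r dvd p \<and> 0 < v \<and> 1 \<le> k \<and>
      (\<forall>i<p. sorted (S i)) \<and>
      distinct (concat (map S [0..<p])) \<and>
      (\<forall>i<p. gaps_ok (nat (ceiling (real (\<Sum>i<p. length (S i)) / real (p * (v + 1)))))
                      (length (S i)) (P i)) \<and>
      (\<Sum>i<p. length (P i)) = p * (v + 1) \<and>
      c * real (p * (v + 1)) * k \<le> real (\<Sum>i<p. length (S i)))
     \<longrightarrow> (\<forall>j<r. real (bucket_size p S (samples p S P) r j)
                 \<le> (1 + real r / real v) * (1 + 1 / k) * real (\<Sum>i<p. length (S i)) / real r)"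
proof (intro exI[of _ "2::real"] conjI allI impI)
  show "(0::real) < 2" by simp
  fix p r v :: nat and k :: real and S :: "nat \<Rightarrow> 'c::linorder list list" and P :: "nat \<Rightarrow> nat list"
  fix j :: nat
  assume H: "0 < p \<and> 0 < r \<and> r dvd p \<and> 0 < v \<and> 1 \<le> k \<and>
      (\<forall>i<p. sorted (S i)) \<and>
      distinct (concat (map S [0..<p])) \<and>
      (\<forall>i<p. gaps_ok (nat (ceiling (real (\<Sum>i<p. length (S i)) / real (p * (v + 1)))))
                      (length (S i)) (P i)) \<and>
      (\<Sum>i<p. length (P i)) = p * (v + 1) \<and>
      2 * real (p * (v + 1)) * k \<le> real (\<Sum>i<p. length (S i))"
    and j: "j < r"
  define N where "N = (\<Sum>i<p. length (S i))"
  define m where "m = p * (v + 1)"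
  define w where "w = nat (ceiling (real N / real m))"
  define V where "V = samples p S P"
  have p0: "0 < p" and r0: "0 < r" and rp: "r dvd p" and v0: "0 < v" and k1: "1 \<le> k"
    and srt: "\<forall>i<p. sorted (S i)" and dst: "distinct (concat (map S [0..<p]))"
    and gp: "\<forall>i<p. gaps_ok w (length (S i)) (P i)"
    and sP: "(\<Sum>i<p. length (P i)) = m"
    and Nb: "2 * real m * k \<le> real N"
    using H by (simp_all add: N_def m_def w_def)
  have "r dvd m" using rp unfolding m_def by simp
  then obtain L where mL: "m = r * L" by blast
  have lenV: "length V = r * L"
    unfolding V_def samples_def using sP mL
    by (simp add: length_concat o_def sum_list_upt_lessThan)
  have setV: "\<And>i t. i < p \<Longrightarrow> t \<in> set (P i) \<Longrightarrow> S i ! t \<in> set V"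
    unfolding V_def samples_def by auto
  have sortedV: "sorted V" unfolding V_def samples_def by simp
  have Pin: "\<forall>i<p. \<forall>t\<in>set (P i). t < length (S i)"
    using gp unfolding gaps_ok_def by auto
  define T where "T i = {t. t < length (S i) \<and> in_bucket V r j (S i ! t)}" for i
  have finT: "\<And>i. finite (T i)" unfolding T_def by simp
  have per: "card (T i) \<le> (w+1) * card (set (P i) \<inter> T i) + w" if i: "i < p" for i
  proof (rule convex_count)
    show "\<forall>a. a + w < length (S i) \<longrightarrow> (\<exists>q\<in>set (P i). a \<le> q \<and> q \<le> a + w)"
      using gaps_cover gp i by blast
    show "T i \<subseteq> {..<length (S i)}" unfolding T_def by auto
    fix x y z assume x: "x \<in> T i" and z: "z \<in> T i" and xy: "x \<le> y" and yz: "y \<le> z"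
    have yl: "y < length (S i)" using z yz unfolding T_def by auto
    have s1: "S i ! x \<le> S i ! y" using sorted_nth_mono[OF _ xy yl] srt i by blast
    have s2: "S i ! y \<le> S i ! z" using sorted_nth_mono[OF _ yz] z srt i unfolding T_def by blast
    have "in_bucket V r j (S i ! x)" "in_bucket V r j (S i ! z)" using x z unfolding T_def by auto
    then have "in_bucket V r j (S i ! y)" using s1 s2 unfolding in_bucket_def
      by (meson order_less_le_trans order_trans)
    then show "y \<in> T i" using yl unfolding T_def by simp
  qed
  have bs: "bucket_size p S V r j = (\<Sum>i<p. card (T i))"
  proof -
    have "{(i, t). i < p \<and> t < length (S i) \<and> in_bucket V r j (S i ! t)} = Sigma {..<p} T"
      unfolding T_def by auto
    then show ?thesis unfolding bucket_size_def using finT by (simp add: card_SigmaI)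
  qed
  define Q where "Q = Sigma {..<p} (\<lambda>i. set (P i) \<inter> T i)"
  have cQ: "card Q = (\<Sum>i<p. card (set (P i) \<inter> T i))"
    unfolding Q_def by (simp add: card_SigmaI)
  have dS: "(\<forall>i<p. distinct (S i)) \<and> (\<forall>i i'. i < p \<and> i' < p \<and> i \<noteq> i' \<longrightarrow> set (S i) \<inter> set (S i') = {})"
    using distinct_concat_S[OF dst] .
  have inj: "inj_on (\<lambda>(i, t). S i ! t) Q"
  proof (rule inj_onI)
    fix a b assume a: "a \<in> Q" and b: "b \<in> Q" and e: "(\<lambda>(i, t). S i ! t) a = (\<lambda>(i, t). S i ! t) b"
    obtain i t where at: "a = (i, t)" "i < p" "t < length (S i)" using a unfolding Q_def T_def by auto
    obtain i' t' where bt: "b = (i', t')" "i' < p" "t' < length (S i')" using b unfolding Q_def T_def by auto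
    have eq: "S i ! t = S i' ! t'" using e at bt by simp
    have ii: "i = i'"
    proof (rule ccontr)
      assume "i \<noteq> i'"
      then have "set (S i) \<inter> set (S i') = {}" using dS at bt by blast
      moreover have "S i ! t \<in> set (S i)" "S i' ! t' \<in> set (S i')" using at bt by auto
      ultimately show False using eq by auto
    qed
    have di: "distinct (S i)" using dS at by blast
    have "t' < length (S i)" using bt ii by simp
    then have "t = t'" using nth_eq_iff_index_eq[OF di at(3)] eq ii by simp
    then show "a = b" using ii at bt by simp
  qed
  have img: "(\<lambda>(i, t). S i ! t) ` Q \<subseteq> {s \<in> set V. in_bucket V r j s}"
    unfolding Q_def T_def using setV by auto
  have "card Q = card ((\<lambda>(i, t). S i ! t) ` Q)" using inj by (simp add: card_image)
  also have "\<dots> \<le> card {s \<in> set V. in_bucket V r j s}" by (rule card_mono[OF _ img]) simp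
  also have "\<dots> \<le> L" by (rule bucket_vals[OF sortedV lenV j])
  finally have QL: "card Q \<le> L" .
  have "bucket_size p S V r j \<le> (\<Sum>i<p. (w+1) * card (set (P i) \<inter> T i) + w)"
    unfolding bs by (intro sum_mono per) simp
  also have "\<dots> = (w+1) * card Q + p * w" unfolding cQ by (simp add: sum.distrib sum_distrib_left)
  also have "\<dots> \<le> (w+1) * L + p * w" using QL by (intro add_right_mono mult_left_mono) auto
  finally have nb: "bucket_size p S V r j \<le> (w+1) * L + p * w" .
  have m0: "0 < m" using p0 unfolding m_def by simp
  have wr: "real w \<le> real N / real m + 1"
  proof -
    have "real N / real m \<ge> 0" by simp
    then have "real w = real_of_int (ceiling (real N / real m))" unfolding w_def by simp
    also have "\<dots> \<le> real N / real m + 1" by (simp add: of_int_ceiling_le_add_one)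
    finally show ?thesis .
  qed
  have "real (bucket_size p S V r j) \<le> real ((w+1) * L + p * w)"
    using nb by (simp only: of_nat_le_iff)
  also have "\<dots> = (real w + 1) * real L + real p * real w" by (simp add: algebra_simps)
  also have "\<dots> \<le> (1 + real r / real v) * (1 + 1 / k) * real N / real r"
  proof (rule final_arith)
    show "real m = real p * (real v + 1)" unfolding m_def by (simp add: algebra_simps)
    show "real r * real L = real m" using mL by simp
  qed (use wr r0 v0 p0 k1 Nb in auto)
  finally show "real (bucket_size p S (samples p S P) r j)
                 \<le> (1 + real r / real v) * (1 + 1 / k) * real (\<Sum>i<p. length (S i)) / real r"
    unfolding V_def N_def .
qed

end
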